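(* Let $n \ge 1$ and let $v_1,\dots,v_n > 0$. Consider the tit-for-tat dynamic on players $N=\{1,\dots,n\}$ with values $v_1,\dots,v_n$, started from a non-degenerate configuration: $x_i(0)>0$ for all $i$, and $y_{i,j}(0)>0$ for all $i,j$ with $\sum_{j=1}^n y_{i,j}(0)=1$ for each $i$. Let $v^* = \max_{j\in[n]} v_j$. Then for each player $i$ there exist constants $c_i, d_i > 0$ such that $$c_i \cdot (v_i v^* )^{\lfloor t/2\rfloor} \le x_i(t) \le d_i \cdot (v_i v^* )^{\lfloor t/2\rfloor} \quad \text{for all } t \in \mathbb{N}.$$ In particular, $\lim_{t\to\infty} x_i(t) = \infty$ if $v_i > 1/v^*$, $\lim_{t\to\infty} x_i(t) = 0$ if $v_i < 1/v^*$, and $x_i(t)$ stays in a bounded region (bounded above and bounded away from $0$) for all $t$ if $v_i = 1/v^*$.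
   Context: Tit-for-tat dynamic: there are $n$ players; player $i$ produces good $i$, and each unit of good $j$ used as input by any player yields $v_j$ units of that player's own good. At time $t$, player $i$ holds an amount $x_i(t)$ of good $i$ and allocates it according to fractions $y_{i,j}(t)\ge 0$, $\sum_j y_{i,j}(t)=1$ ($y_{i,j}(t)$ is the fraction of good $i$ given to player $j$). At each time $t$: (Exchange) every player $i$ receives $w_{i,j}(t) = y_{j,i}(t)\, x_j(t)$ units of each good $j$; (Production) $x_i(t+1) = \sum_{j=1}^n v_j\, w_{i,j}(t)$; (Fractions update) $y_{i,j}(t+1) = \dfrac{v_j\, w_{i,j}(t)}{x_i(t+1)}$. *)

theory Defs
  imports Complex_Main
begin

text \<open>Players are indexed by 0..n-1 (the paper's 1..n). x t i is the amount x_i(t) of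
good i held by player i at time t; y t i j is the fraction y_{i,j}(t) of good i given to
player j at time t.\<close>

definition tft_exchange :: "(nat \<Rightarrow> nat \<Rightarrow> nat \<Rightarrow> real) \<Rightarrow> (nat \<Rightarrow> nat \<Rightarrow> real) \<Rightarrow> nat \<Rightarrow> nat \<Rightarrow> nat \<Rightarrow> real"
  where "tft_exchange y x t i j = y t j i * x t j"

definition tft_dynamic ::
  "nat \<Rightarrow> (nat \<Rightarrow> real) \<Rightarrow> (nat \<Rightarrow> nat \<Rightarrow> real) \<Rightarrow> (nat \<Rightarrow> nat \<Rightarrow> nat \<Rightarrow> real) \<Rightarrow> bool"
  where "tft_dynamic n v x y \<longleftrightarrow>
    (\<forall>t. \<forall>i<n.
        x (Suc t) i = (\<Sum>j<n. v j * tft_exchange y x t i j)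
      \<and> (\<forall>j<n. y (Suc t) i j = v j * tft_exchange y x t i j / x (Suc t) i))"

end

theory Submission
  imports Defs
begin

lemma div2_at_top: "filterlim (\<lambda>t::nat. t div 2) at_top sequentially"
  unfolding filterlim_at_top eventually_sequentially
  by (metis div_le_mono nonzero_mult_div_cancel_left zero_neq_numeral)

lemma tft_pos:
  assumes n1: "n \<ge> 1"
    and vp: "\<forall>j<n. v j > 0"
    and x0: "\<forall>i<n. x 0 i > 0"
    and y0: "\<forall>i<n. \<forall>j<n. y 0 i j > 0"
    and dyn: "tft_dynamic n v x y"
  shows "(\<forall>i<n. x t i > 0) \<and> (\<forall>i<n. \<forall>j<n. y t i j > 0)"
proof (induction t)
  case 0
  then show ?case using x0 y0 by auto
next
  case (Suc t)
  have xs: "x (Suc t) i > 0" if "i < n" for i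
  proof -
    have "x (Suc t) i = (\<Sum>j<n. v j * tft_exchange y x t i j)"
      using dyn that unfolding tft_dynamic_def by blast
    also have "\<dots> > 0"
    proof (rule sum_pos)
      show "finite {..<n}" by simp
      show "{..<n} \<noteq> {}" using n1 by (simp add: lessThan_empty_iff)
      fix j assume "j \<in> {..<n}"
      then show "0 < v j * tft_exchange y x t i j"
        using Suc vp that unfolding tft_exchange_def by auto
    qed
    finally show ?thesis .
  qed
  moreover have "y (Suc t) i j > 0" if "i < n" "j < n" for i j
  proof -
    have "y (Suc t) i j = v j * tft_exchange y x t i j / x (Suc t) i"
      using dyn that unfolding tft_dynamic_def by blast
    then show ?thesis using xs[OF that(1)] Suc vp that unfolding tft_exchange_def by auto
  qed
  ultimately show ?case by auto
qed

theorem theorem1: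
  fixes n :: nat and v :: "nat \<Rightarrow> real"
    and x :: "nat \<Rightarrow> nat \<Rightarrow> real" and y :: "nat \<Rightarrow> nat \<Rightarrow> nat \<Rightarrow> real"
  assumes "n \<ge> 1"
    and "\<forall>j<n. v j > 0"
    and "\<forall>i<n. x 0 i > 0"
    and "\<forall>i<n. \<forall>j<n. y 0 i j > 0"
    and "\<forall>i<n. (\<Sum>j<n. y 0 i j) = 1"
    and "tft_dynamic n v x y"
  defines "vstar \<equiv> Max (v ` {..<n})"
  shows "\<forall>i<n.
      (\<exists>c d. c > 0 \<and> d > 0 \<and>
         (\<forall>t. c * (v i * vstar) ^ (t div 2) \<le> x t i \<and> x t i \<le> d * (v i * vstar) ^ (t div 2)))
    \<and> (v i > 1 / vstar \<longrightarrow> filterlim (\<lambda>t. x t i) at_top sequentially)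
    \<and> (v i < 1 / vstar \<longrightarrow> (\<lambda>t. x t i) \<longlonglongrightarrow> 0)
    \<and> (v i = 1 / vstar \<longrightarrow> (\<exists>a b. a > 0 \<and> b > 0 \<and> (\<forall>t. a \<le> x t i \<and> x t i \<le> b)))"
proof -
  note n1 = assms(1) and vp = assms(2) and x0 = assms(3) and y0 = assms(4)
    and ys = assms(5) and dyn = assms(6)
  note pos = tft_pos[OF n1 vp x0 y0 dyn]
  define z where "z t i j = y t i j * x t i" for t i j
  have zpos: "z t i j > 0" if "i < n" "j < n" for t i j
    using pos[of t] that unfolding z_def by auto
  have zstep: "z (Suc t) i j = v j * z t j i" if "i < n" "j < n" for t i j
  proof -
    have "y (Suc t) i j = v j * tft_exchange y x t i j / x (Suc t) i"
      using dyn that unfolding tft_dynamic_def by blast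
    moreover have "x (Suc t) i > 0" using pos that by blast
    ultimately show ?thesis unfolding z_def tft_exchange_def by auto
  qed
  have xsum: "x t i = (\<Sum>j<n. z t i j)" if "i < n" for t i
  proof (cases t)
    case 0
    have "(\<Sum>j<n. z t i j) = (\<Sum>j<n. y 0 i j) * x 0 i"
      unfolding z_def 0 by (simp add: sum_distrib_right)
    then show ?thesis using ys that 0 by simp
  next
    case (Suc s)
    have "(\<Sum>j<n. z t i j) = (\<Sum>j<n. v j * z s j i)"
      unfolding Suc by (rule sum.cong) (auto intro: zstep that)
    also have "\<dots> = x t i"
      using dyn that unfolding tft_dynamic_def tft_exchange_def z_def Suc
      by (simp add: mult.commute)
    finally show ?thesis by simp
  qed
  define G where "G (t::nat) i j = (if even t then z 0 i j else v j * z 0 j i)" for t i j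
  have zform: "z t i j = (v i * v j) ^ (t div 2) * G t i j" if "i < n" "j < n" for t i j
    using that
  proof (induction t arbitrary: i j)
    case 0
    then show ?case by (simp add: G_def)
  next
    case (Suc t)
    have "z (Suc t) i j = v j * ((v j * v i) ^ (t div 2) * G t j i)"
      using zstep Suc by simp
    also have "\<dots> = (v i * v j) ^ (Suc t div 2) * G (Suc t) i j"
    proof (cases "even t")
      case True
      then show ?thesis by (simp add: G_def mult.commute mult.left_commute)
    next
      case False
      then have "Suc t div 2 = Suc (t div 2)" by presburger
      with False show ?thesis by (simp add: G_def mult.commute mult.left_commute)
    qed
    finally show ?case .
  qed
  have Gpos: "G t i j > 0" if "i < n" "j < n" for t i j
    using zpos vp that unfolding G_def by auto
  have fin: "finite (v ` {..<n})" by simp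
  have ne: "v ` {..<n} \<noteq> {}" using n1 by (simp add: lessThan_empty_iff)
  obtain js where js: "js < n" "v js = vstar"
    using Max_in[OF fin ne] unfolding vstar_def by auto
  have vle: "v j \<le> vstar" if "j < n" for j
    unfolding vstar_def using that fin by auto
  have vsp: "vstar > 0" using js vp by auto
  show ?thesis
  proof (intro allI impI)
    fix i assume i: "i < n"
    define q where "q = v i * vstar"
    have qp: "q > 0" using vsp vp i q_def by auto
    define c where "c = min (z 0 i js) (v js * z 0 js i)"
    define d where "d = (\<Sum>j<n. max (z 0 i j) (v j * z 0 j i))"
    have cp: "c > 0" using zpos i js vp unfolding c_def by auto
    have lo: "c * q ^ (t div 2) \<le> x t i" for t
    proof -
      have Gc: "c \<le> G t i js" unfolding c_def G_def by auto
      have "z t i js = q ^ (t div 2) * G t i js"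
        using zform[OF i js(1)] js unfolding q_def by simp
      then have "c * q ^ (t div 2) \<le> z t i js"
        using Gc qp by (simp add: mult.commute mult_right_mono)
      also have "\<dots> \<le> (\<Sum>j<n. z t i j)"
        by (rule member_le_sum) (use js i in \<open>auto intro: less_imp_le zpos\<close>)
      finally show ?thesis using xsum[OF i] by simp
    qed
    have hi: "x t i \<le> d * q ^ (t div 2)" for t
    proof -
      have "x t i = (\<Sum>j<n. (v i * v j) ^ (t div 2) * G t i j)"
        using xsum[OF i] zform i by simp
      also have "\<dots> \<le> (\<Sum>j<n. q ^ (t div 2) * max (z 0 i j) (v j * z 0 j i))"
      proof (rule sum_mono)
        fix j assume j: "j \<in> {..<n}"
        have a: "(v i * v j) ^ (t div 2) \<le> q ^ (t div 2)"
        proof -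
          have "v i > 0" "v j > 0" using vp i j by auto
          then show ?thesis unfolding q_def using vle[of j] j
            by (intro power_mono mult_left_mono) auto
        qed
        have b: "G t i j \<le> max (z 0 i j) (v j * z 0 j i)" unfolding G_def by auto
        show "(v i * v j) ^ (t div 2) * G t i j \<le> q ^ (t div 2) * max (z 0 i j) (v j * z 0 j i)"
          using a b Gpos[of i j t] i j qp
          by (intro mult_mono) auto
      qed
      also have "\<dots> = d * q ^ (t div 2)"
        unfolding d_def by (simp add: sum_distrib_left mult.commute)
      finally show ?thesis .
    qed
    have dp: "d > 0"
    proof -
      have "c * q ^ 0 \<le> d * q ^ 0" using lo[of 0] hi[of 0] by simp
      then show ?thesis using cp by simp
    qed
    have iff1: "(v i > 1 / vstar) = (q > 1)" unfolding q_def using vsp by (simp add: field_simps)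
    have iff2: "(v i < 1 / vstar) = (q < 1)" unfolding q_def using vsp by (simp add: field_simps)
    have iff3: "(v i = 1 / vstar) = (q = 1)" unfolding q_def using vsp by (simp add: field_simps)
    have C0: "\<exists>c d. c > 0 \<and> d > 0 \<and>
         (\<forall>t. c * (v i * vstar) ^ (t div 2) \<le> x t i \<and> x t i \<le> d * (v i * vstar) ^ (t div 2))"
      using lo hi cp dp unfolding q_def by blast
    have C1: "v i > 1 / vstar \<longrightarrow> filterlim (\<lambda>t. x t i) at_top sequentially"
    proof
      assume "v i > 1 / vstar"
      then have q1: "q > 1" using iff1 by simp
      show "filterlim (\<lambda>t. x t i) at_top sequentially"
        unfolding filterlim_at_top eventually_sequentially
      proof
        fix Z :: real
        obtain k where k: "Z / c < q ^ k" using real_arch_pow[OF q1] by blast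
        show "\<exists>N. \<forall>t\<ge>N. Z \<le> x t i"
        proof (intro exI allI impI)
          fix t assume "2 * k \<le> t"
          then have "k \<le> t div 2" by linarith
          then have "q ^ k \<le> q ^ (t div 2)" using q1 by (simp add: power_increasing)
          then have "Z / c < q ^ (t div 2)" using k by linarith
          then have "Z < c * q ^ (t div 2)" using cp by (simp add: field_simps)
          then show "Z \<le> x t i" using lo[of t] by linarith
        qed
      qed
    qed
    have C2: "v i < 1 / vstar \<longrightarrow> (\<lambda>t. x t i) \<longlonglongrightarrow> 0"
    proof
      assume "v i < 1 / vstar"
      then have q1: "q < 1" using iff2 by simp
      have "(\<lambda>k. q ^ k) \<longlonglongrightarrow> 0" using q1 qp by (intro LIMSEQ_power_zero) auto
      then have "(\<lambda>t. q ^ (t div 2)) \<longlonglongrightarrow> 0"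
        using filterlim_compose div2_at_top by blast
      then have "(\<lambda>t. d * q ^ (t div 2)) \<longlonglongrightarrow> 0"
        by (rule tendsto_mult_right_zero)
      moreover have "(\<lambda>t. 0::real) \<longlonglongrightarrow> 0" by simp
      moreover have "\<forall>\<^sub>F t in sequentially. 0 \<le> x t i"
        using lo cp qp by (intro always_eventually allI) (meson order.trans less_imp_le mult_nonneg_nonneg zero_le_power)
      moreover have "\<forall>\<^sub>F t in sequentially. x t i \<le> d * q ^ (t div 2)"
        using hi by (intro always_eventually allI)
      ultimately show "(\<lambda>t. x t i) \<longlonglongrightarrow> 0"
        using tendsto_sandwich[of "\<lambda>t. 0" "\<lambda>t. x t i" sequentially "\<lambda>t. d * q ^ (t div 2)" 0]
        by blast
    qed
    have C3: "v i = 1 / vstar \<longrightarrow> (\<exists>a b. a > 0 \<and> b > 0 \<and> (\<forall>t. a \<le> x t i \<and> x t i \<le> b))"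
    proof
      assume "v i = 1 / vstar"
      then have "q = 1" using iff3 by simp
      then show "\<exists>a b. a > 0 \<and> b > 0 \<and> (\<forall>t. a \<le> x t i \<and> x t i \<le> b)"
        using lo hi cp dp by auto
    qed
    show "(\<exists>c d. c > 0 \<and> d > 0 \<and>
         (\<forall>t. c * (v i * vstar) ^ (t div 2) \<le> x t i \<and> x t i \<le> d * (v i * vstar) ^ (t div 2)))
    \<and> (v i > 1 / vstar \<longrightarrow> filterlim (\<lambda>t. x t i) at_top sequentially)
    \<and> (v i < 1 / vstar \<longrightarrow> (\<lambda>t. x t i) \<longlonglongrightarrow> 0)
    \<and> (v i = 1 / vstar \<longrightarrow> (\<exists>a b. a > 0 \<and> b > 0 \<and> (\<forall>t. a \<le> x t i \<and> x t i \<le> b)))" using C0 C1 C2 C3 by blast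
  qed
qed

end
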